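(* Let $m>0$ and $a_1,a_2\in(-\infty,4m^2)$. Define on $I=(-\infty,4m^2)$ the function $A(\gamma):=(a_1-\gamma)(a_2-\gamma)J(\gamma)$. Then $A$ is convex on $I$ (indeed $A''(\gamma)=\int_{4m^2}^\infty\rho(M)\frac{2(M-a_1)(M-a_2)}{(M-\gamma)^3}dM>0$), $A'$ is monotonically increasing, $\lim_{\gamma\to-\infty}A'(\gamma)=-\infty$, $\lim_{\gamma\to4m^2}A'(\gamma)=+\infty$, and hence $A'(I)=\mathbb{R}$.
   Context: $\rho(M)=\frac{1}{16\pi^2}\sqrt{1-\frac{4m^2}{M}}\frac1M$ for $M\ge4m^2$, and $J(\gamma)=\int_{4m^2}^\infty\frac{\rho(M)}{M-\gamma}dM$ for $\gamma<4m^2$. *)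

theory Defs
  imports "HOL-Analysis.Analysis"
begin

definition rho :: "real \<Rightarrow> real \<Rightarrow> real" where
  "rho m M = 1 / (16 * pi\<^sup>2) * sqrt (1 - 4 * m\<^sup>2 / M) * (1 / M)"

definition J :: "real \<Rightarrow> real \<Rightarrow> real" where
  "J m \<gamma> = (LINT M:{4 * m\<^sup>2..}|lborel. rho m M / (M - \<gamma>))"

definition A :: "real \<Rightarrow> real \<Rightarrow> real \<Rightarrow> real \<Rightarrow> real" where
  "A m a1 a2 \<gamma> = (a1 - \<gamma>) * (a2 - \<gamma>) * J m \<gamma>"

end

theory Submission
  imports Defs "HOL-Real_Asymp.Real_Asymp"
begin

lemma rho_meas[measurable]: "rho m \<in> borel_measurable borel"
  unfolding rho_def by measurable

lemma rho_nonneg: assumes "m > 0" "M \<ge> 4*m\<^sup>2" shows "0 \<le> rho m M"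
proof -
  have "M > 0" using assms by (smt (verit) zero_less_power)
  moreover have "4*m\<^sup>2/M \<le> 1" using assms \<open>M>0\<close> by (simp add: divide_le_eq_1)
  ultimately show ?thesis unfolding rho_def by simp
qed

lemma rho_le: assumes "m > 0" "M \<ge> 4*m\<^sup>2" shows "rho m M \<le> (1/(16*pi\<^sup>2)) / M"
proof -
  have "M > 0" using assms by (smt (verit) zero_less_power)
  moreover have "4*m\<^sup>2/M \<le> 1" using assms \<open>M>0\<close> by (simp add: divide_le_eq_1)
  moreover have "0 \<le> 4*m\<^sup>2/M" using \<open>M>0\<close> by simp
  ultimately have "sqrt (1 - 4*m\<^sup>2/M) \<le> 1" by simp
  thus ?thesis unfolding rho_def using \<open>M>0\<close>
    by (simp add: divide_right_mono mult_left_le)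
qed

lemma inv_sq_integrable: assumes "(s::real) > 0" shows "set_integrable lborel {s..} (\<lambda>M. 1 / M\<^sup>2)"
proof -
  have "set_integrable lborel (einterval (ereal (s/2)) \<infinity>) (\<lambda>M. 1 / M\<^sup>2)"
  proof (rule interval_integral_FTC_nonneg(1)[where F="\<lambda>x. - 1/x" and A="- 2/s" and B=0])
    show "ereal (s/2) < \<infinity>" by simp
    fix x assume "ereal (s/2) < ereal x" "ereal x < \<infinity>"
    hence "x > 0" using assms by simp
    thus "DERIV (\<lambda>x. - 1 / x) x :> 1 / x\<^sup>2"
      by (auto intro!: derivative_eq_intros simp: power2_eq_square)
    show "isCont (\<lambda>M. 1 / M\<^sup>2) x" using \<open>x>0\<close> by (intro continuous_intros) auto
  next
    show "AE x in lborel. ereal (s / 2) < ereal x \<longrightarrow> ereal x < \<infinity> \<longrightarrow> 0 \<le> 1 / x\<^sup>2" by simp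
    show "(((\<lambda>x. - 1 / x) \<circ> real_of_ereal) \<longlongrightarrow> (- 2 / s)) (at_right (ereal (s / 2)))"
      using assms unfolding ereal_tendsto_simps
      by (auto intro!: tendsto_eq_intros)
    show "(((\<lambda>x. - 1 / x) \<circ> real_of_ereal) \<longlongrightarrow> 0) (at_left \<infinity>)"
      unfolding ereal_tendsto_simps
      by real_asymp
  qed
  hence "set_integrable lborel {s/2<..} (\<lambda>M. 1 / M\<^sup>2)" by simp
  thus ?thesis by (rule set_integrable_subset) (use assms in auto)
qed

lemma kappa_bound:
  assumes "(s::real) > 0" "\<gamma> < s" "M \<ge> s"
  shows "min 1 ((s-\<gamma>)/s) * M \<le> M - \<gamma>" and "min 1 ((s-\<gamma>)/s) > 0"
proof -
  show "min 1 ((s-\<gamma>)/s) > 0" using assms by simp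
  show "min 1 ((s-\<gamma>)/s) * M \<le> M - \<gamma>"
  proof (cases "\<gamma> \<le> 0")
    case True
    have "min 1 ((s-\<gamma>)/s) * M \<le> 1 * M" using assms by (intro mult_right_mono) auto
    thus ?thesis using True by simp
  next
    case False
    have "min 1 ((s-\<gamma>)/s) * M \<le> ((s-\<gamma>)/s) * M" using assms by (intro mult_right_mono) auto
    also have "\<dots> = M - \<gamma> * (M/s)" using assms by (simp add: field_simps)
    also have "\<dots> \<le> M - \<gamma>" using assms False by (simp add: field_simps)
    finally show ?thesis .
  qed
qed

lemma int_gen:
  assumes m: "m > 0" and g: "\<gamma> < 4*m\<^sup>2" and meas: "g \<in> borel_measurable borel"
    and bd: "\<And>M. M \<ge> 4*m\<^sup>2 \<Longrightarrow> \<bar>g M\<bar> \<le> C / (M - \<gamma>)"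
  shows "set_integrable lborel {4*m\<^sup>2..} (\<lambda>M. rho m M * g M)"
proof -
  define s where "s = 4*m\<^sup>2"
  define \<kappa> where "\<kappa> = min 1 ((s-\<gamma>)/s)"
  define c where "c = 1/(16*pi\<^sup>2)"
  have s0: "s > 0" using m by (simp add: s_def)
  have k0: "\<kappa> > 0" using kappa_bound[OF s0] g unfolding s_def \<kappa>_def by auto
  have C0: "C \<ge> 0"
  proof -
    have "0 \<le> C / (s - \<gamma>)" using bd[of s] unfolding s_def by (smt (verit))
    thus ?thesis using g s_def by (simp add: zero_le_divide_iff)
  qed
  have c0: "c \<ge> 0" unfolding c_def by simp
  have "set_integrable lborel {s..} (\<lambda>M. (c*C/\<kappa>) * (1 / M\<^sup>2))"
    using inv_sq_integrable[OF s0] by (rule set_integrable_mult_right)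
  moreover have "set_borel_measurable lborel {s..} (\<lambda>M. rho m M * g M)"
    unfolding set_borel_measurable_def using meas by measurable
  moreover have "AE M in lborel. M \<in> {s..} \<longrightarrow> norm (rho m M * g M) \<le> norm ((c*C/\<kappa>) * (1 / M\<^sup>2))"
  proof (rule AE_I2, rule impI)
    fix M assume M: "M \<in> {s..}"
    hence Ms: "M \<ge> s" by simp
    have M0: "M > 0" using Ms s0 by simp
    have kM: "\<kappa> * M \<le> M - \<gamma>" using kappa_bound[OF s0 _ Ms] g unfolding \<kappa>_def s_def by auto
    have r0: "0 \<le> rho m M" and r1: "rho m M \<le> c / M" using rho_nonneg[OF m] rho_le[OF m] Ms
      unfolding s_def c_def by auto
    have gb: "\<bar>g M\<bar> \<le> C / (M - \<gamma>)" using bd Ms unfolding s_def by auto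
    have kM0: "\<kappa> * M > 0" using k0 M0 by simp
    have "C / (M - \<gamma>) \<le> C / (\<kappa> * M)" using C0 kM0 kM
      by (intro divide_left_mono) (auto intro: mult_pos_pos)
    have "norm (rho m M * g M) = rho m M * \<bar>g M\<bar>" using r0 by (simp add: abs_mult)
    also have "\<dots> \<le> (c / M) * (C / (\<kappa> * M))"
      using r0 r1 gb \<open>C / (M - \<gamma>) \<le> C / (\<kappa> * M)\<close> c0 M0
      by (intro mult_mono) auto
    also have "\<dots> = (c*C/\<kappa>) * (1 / M\<^sup>2)" by (simp add: power2_eq_square)
    also have "\<dots> \<le> norm ((c*C/\<kappa>) * (1 / M\<^sup>2))" unfolding real_norm_def by (rule abs_ge_self)
    finally show "norm (rho m M * g M) \<le> norm ((c*C/\<kappa>) * (1 / M\<^sup>2))" .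
  qed
  ultimately have "set_integrable lborel {s..} (\<lambda>M. rho m M * g M)"
    by (rule set_integrable_bound)
  thus ?thesis unfolding s_def .
qed

definition K :: "real \<Rightarrow> nat \<Rightarrow> real \<Rightarrow> real" where
  "K m n \<gamma> = (LINT M:{4*m\<^sup>2..}|lborel. rho m M / (M - \<gamma>) ^ n)"

lemma K_int:
  assumes m: "m > 0" and g: "\<gamma> < 4*m\<^sup>2"
  shows "set_integrable lborel {4*m\<^sup>2..} (\<lambda>M. rho m M / (M - \<gamma>) ^ Suc n)"
proof -
  define \<delta> where "\<delta> = 4*m\<^sup>2 - \<gamma>"
  have d0: "\<delta> > 0" using g by (simp add: \<delta>_def)
  have "set_integrable lborel {4*m\<^sup>2..} (\<lambda>M. rho m M * (1 / (M - \<gamma>) ^ Suc n))"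
  proof (rule int_gen[OF m g, where C="1/\<delta>^n"])
    show "(\<lambda>M. 1 / (M - \<gamma>) ^ Suc n) \<in> borel_measurable borel" by measurable
    fix M assume M: "4 * m\<^sup>2 \<le> M"
    have D: "M - \<gamma> \<ge> \<delta>" using M by (simp add: \<delta>_def)
    hence D0: "M - \<gamma> > 0" using d0 by simp
    have "\<delta>^n \<le> (M-\<gamma>)^n" using D d0 by (intro power_mono) auto
    hence "\<delta>^n * (M-\<gamma>) \<le> (M-\<gamma>)^Suc n" using D0 by (simp add: mult_right_mono mult.commute)
    moreover have "\<delta>^n * (M-\<gamma>) > 0" using d0 D0 by simp
    ultimately have "1 / (M - \<gamma>) ^ Suc n \<le> 1 / (\<delta>^n * (M-\<gamma>))"
      by (intro divide_left_mono) auto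
    thus "\<bar>1 / (M - \<gamma>) ^ Suc n\<bar> \<le> 1 / \<delta> ^ n / (M - \<gamma>)" using D0 by simp
  qed
  thus ?thesis by simp
qed

lemma deriv_from_quad:
  fixes F :: "real \<Rightarrow> real"
  assumes r: "r > 0" and bd: "\<And>h. h \<noteq> 0 \<Longrightarrow> \<bar>h\<bar> < r \<Longrightarrow> \<bar>F (x+h) - F x - h*L\<bar> \<le> B*h\<^sup>2"
  shows "(F has_real_derivative L) (at x)"
  unfolding DERIV_def
proof (rule tendsto_sandwich[where f="\<lambda>h. L - \<bar>B\<bar>*\<bar>h\<bar>" and h="\<lambda>h. L + \<bar>B\<bar>*\<bar>h\<bar>"])
  have ev: "\<forall>\<^sub>F h in at 0. \<bar>(F (x + h) - F x) / h - L\<bar> \<le> \<bar>B\<bar>*\<bar>h\<bar>"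
  proof -
    have "\<forall>h. h \<noteq> 0 \<and> dist h 0 < r \<longrightarrow> \<bar>(F (x + h) - F x) / h - L\<bar> \<le> \<bar>B\<bar>*\<bar>h\<bar>"
    proof (intro allI impI)
      fix h :: real assume "h \<noteq> 0 \<and> dist h 0 < r"
      hence h: "h \<noteq> 0" "\<bar>h\<bar> < r" by auto
      have "(F (x + h) - F x) / h - L = (F (x+h) - F x - h*L) / h" using h by (simp add: field_simps)
      hence "\<bar>(F (x + h) - F x) / h - L\<bar> = \<bar>F (x+h) - F x - h*L\<bar> / \<bar>h\<bar>" by (simp add: abs_divide)
      also have "\<dots> \<le> B*h\<^sup>2 / \<bar>h\<bar>" using bd[OF h] by (simp add: divide_right_mono)
      also have "\<dots> = B * \<bar>h\<bar>" using h by (simp add: power2_eq_square field_simps abs_mult_self_eq)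
      also have "\<dots> \<le> \<bar>B\<bar>*\<bar>h\<bar>" by (simp add: mult_right_mono)
      finally show "\<bar>(F (x + h) - F x) / h - L\<bar> \<le> \<bar>B\<bar>*\<bar>h\<bar>" .
    qed
    thus ?thesis unfolding eventually_at using r by blast
  qed
  show "\<forall>\<^sub>F h in at 0. L - \<bar>B\<bar>*\<bar>h\<bar> \<le> (F (x + h) - F x) / h"
    using ev by eventually_elim linarith
  show "\<forall>\<^sub>F h in at 0. (F (x + h) - F x) / h \<le> L + \<bar>B\<bar>*\<bar>h\<bar>"
    using ev by eventually_elim linarith
  show "((\<lambda>h. L - \<bar>B\<bar>*\<bar>h\<bar>) \<longlongrightarrow> L) (at 0)"
    by (auto intro!: tendsto_eq_intros)
  show "((\<lambda>h. L + \<bar>B\<bar>*\<bar>h\<bar>) \<longlongrightarrow> L) (at 0)"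
    by (auto intro!: tendsto_eq_intros)
qed

lemma abs_set_integral_le:
  fixes f g :: "real \<Rightarrow> real"
  assumes "set_integrable lborel S f" "set_integrable lborel S g" "\<And>x. x \<in> S \<Longrightarrow> \<bar>f x\<bar> \<le> g x"
  shows "\<bar>LINT x:S|lborel. f x\<bar> \<le> (LINT x:S|lborel. g x)"
proof -
  have "(LINT x:S|lborel. f x) \<le> (LINT x:S|lborel. g x)"
    using assms by (intro set_integral_mono) (auto simp: abs_le_iff)
  moreover have "(LINT x:S|lborel. - g x) \<le> (LINT x:S|lborel. f x)"
  proof (rule set_integral_mono)
    show "set_integrable lborel S (\<lambda>x. - g x)"
      using set_integrable_mult_right[of "-1" lborel S g] assms(2) by simp
    show "set_integrable lborel S f" by fact
    fix x assume "x \<in> S" thus "- g x \<le> f x" using assms(3)[of x] by linarith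
  qed
  moreover have "(LINT x:S|lborel. - g x) = - (LINT x:S|lborel. g x)"
    using assms(2) by (rule set_integral_uminus)
  ultimately show ?thesis by linarith
qed

lemma quad_generic:
  assumes m: "m > 0" and g: "\<gamma> < 4*m\<^sup>2" and gh: "\<gamma> + h < 4*m\<^sup>2"
    and emeas: "e \<in> borel_measurable borel"
    and eq: "\<And>M. M \<ge> 4*m\<^sup>2 \<Longrightarrow> 1/(M-(\<gamma>+h))^Suc k - 1/(M-\<gamma>)^Suc k - h*(c*(1/(M-\<gamma>)^Suc (Suc k))) = e M"
    and ebd: "\<And>M. M \<ge> 4*m\<^sup>2 \<Longrightarrow> \<bar>e M\<bar> \<le> C / (M-\<gamma>)"
  shows "\<bar>K m (Suc k) (\<gamma>+h) - K m (Suc k) \<gamma> - h*(c*K m (Suc (Suc k)) \<gamma>)\<bar> \<le> C * K m 1 \<gamma>"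
proof -
  define S where "S = {4*m\<^sup>2..}"
  define f1 where "f1 = (\<lambda>M. rho m M / (M-(\<gamma>+h))^Suc k)"
  define f2 where "f2 = (\<lambda>M. rho m M / (M-\<gamma>)^Suc k)"
  define f3 where "f3 = (\<lambda>M. rho m M / (M-\<gamma>)^Suc (Suc k))"
  define f0 where "f0 = (\<lambda>M. rho m M / (M-\<gamma>)^Suc 0)"
  have i1: "set_integrable lborel S f1" unfolding S_def f1_def by (rule K_int[OF m gh])
  have i2: "set_integrable lborel S f2" unfolding S_def f2_def by (rule K_int[OF m g])
  have i3: "set_integrable lborel S f3" unfolding S_def f3_def by (rule K_int[OF m g])
  have i0: "set_integrable lborel S f0" unfolding S_def f0_def by (rule K_int[OF m g])
  have i3': "set_integrable lborel S (\<lambda>M. h*(c*f3 M))" using i3 by auto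
  have i0': "set_integrable lborel S (\<lambda>M. C * f0 M)" using i0 by auto
  have ie: "set_integrable lborel S (\<lambda>M. rho m M * e M)"
    unfolding S_def by (rule int_gen[OF m g emeas ebd])
  have "K m (Suc k) (\<gamma>+h) - K m (Suc k) \<gamma> - h*(c*K m (Suc (Suc k)) \<gamma>)
      = (LINT M:S|lborel. f1 M) - (LINT M:S|lborel. f2 M) - (LINT M:S|lborel. h*(c*f3 M))"
    unfolding K_def S_def f1_def f2_def f3_def set_integral_mult_right ..
  also have "\<dots> = (LINT M:S|lborel. f1 M - f2 M) - (LINT M:S|lborel. h*(c*f3 M))"
    using i1 i2 by (simp add: set_integral_diff(2))
  also have "\<dots> = (LINT M:S|lborel. f1 M - f2 M - h*(c*f3 M))"
    using i1 i2 i3' by (subst set_integral_diff(2)) (auto intro: set_integral_diff(1))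
  also have "\<dots> = (LINT M:S|lborel. rho m M * e M)"
  proof (rule set_lebesgue_integral_cong)
    show "S \<in> sets lborel" unfolding S_def by simp
    show "\<forall>M. M \<in> S \<longrightarrow> f1 M - f2 M - h * (c * f3 M) = rho m M * e M"
    proof (intro allI impI)
      fix M assume "M \<in> S"
      hence M: "M \<ge> 4*m\<^sup>2" unfolding S_def by simp
      have "f1 M - f2 M - h * (c * f3 M) = rho m M * (1/(M-(\<gamma>+h))^Suc k - 1/(M-\<gamma>)^Suc k - h*(c*(1/(M-\<gamma>)^Suc (Suc k))))"
        unfolding f1_def f2_def f3_def by (simp add: algebra_simps)
      also have "\<dots> = rho m M * e M" using eq[OF M] by simp
      finally show "f1 M - f2 M - h * (c * f3 M) = rho m M * e M" .
    qed
  qed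
  finally have eqI: "K m (Suc k) (\<gamma>+h) - K m (Suc k) \<gamma> - h*(c*K m (Suc (Suc k)) \<gamma>) = (LINT M:S|lborel. rho m M * e M)" .
  have "\<bar>LINT M:S|lborel. rho m M * e M\<bar> \<le> (LINT M:S|lborel. C * f0 M)"
  proof (rule abs_set_integral_le[OF ie i0'])
    fix M assume "M \<in> S"
    hence M: "M \<ge> 4*m\<^sup>2" unfolding S_def by simp
    have r0: "rho m M \<ge> 0" using rho_nonneg[OF m M] .
    have "\<bar>rho m M * e M\<bar> = rho m M * \<bar>e M\<bar>" using r0 by (simp add: abs_mult)
    also have "\<dots> \<le> rho m M * (C / (M-\<gamma>))" using ebd[OF M] r0 by (rule mult_left_mono)
    also have "\<dots> = C * f0 M" unfolding f0_def by simp
    finally show "\<bar>rho m M * e M\<bar> \<le> C * f0 M" .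
  qed
  also have "(LINT M:S|lborel. C * f0 M) = C * K m 1 \<gamma>" unfolding K_def f0_def S_def set_integral_mult_right by simp
  finally show ?thesis using eqI by simp
qed

lemma e1_eq:
  fixes D h :: real assumes "D > 0" "D - h > 0"
  shows "1/(D-h)^Suc 0 - 1/D^Suc 0 - h*(1*(1/D^Suc (Suc 0))) = h\<^sup>2 / ((D-h)*D\<^sup>2)"
proof -
  have a: "D - h \<noteq> 0" "D \<noteq> 0" using assms by auto
  show ?thesis using a
    by (simp add: divide_simps power2_eq_square power3_eq_cube) (simp add: algebra_simps)
qed

lemma e1_bd:
  fixes D h \<delta> :: real assumes "\<delta> > 0" "D \<ge> \<delta>" "\<bar>h\<bar> < \<delta>/2"
  shows "\<bar>h\<^sup>2 / ((D-h)*D\<^sup>2)\<bar> \<le> (2*h\<^sup>2/\<delta>\<^sup>2) / D"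
proof -
  have D0: "D > 0" using assms by simp
  have Dh: "D - h \<ge> D/2" using assms by simp
  have "\<delta>\<^sup>2 \<le> D\<^sup>2" using assms by (intro power_mono) auto
  have "(\<delta>\<^sup>2 * D)/2 \<le> (D/2) * D\<^sup>2" using \<open>\<delta>\<^sup>2 \<le> D\<^sup>2\<close> D0 by (simp add: mult_right_mono mult.commute)
  also have "\<dots> \<le> (D-h)*D\<^sup>2" using Dh D0 by (intro mult_right_mono) auto
  finally have X: "(\<delta>\<^sup>2 * D)/2 \<le> (D-h)*D\<^sup>2" .
  have Y: "(\<delta>\<^sup>2 * D)/2 > 0" using assms D0 by simp
  have "\<bar>h\<^sup>2 / ((D-h)*D\<^sup>2)\<bar> = h\<^sup>2 / ((D-h)*D\<^sup>2)" using Dh D0 by simp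
  also have "\<dots> \<le> h\<^sup>2 / ((\<delta>\<^sup>2 * D)/2)" using X Y by (intro divide_left_mono) auto
  also have "\<dots> = (2*h\<^sup>2/\<delta>\<^sup>2) / D" by (simp add: field_simps)
  finally show ?thesis .
qed

lemma e2_eq:
  fixes D h :: real assumes "D > 0" "D - h > 0"
  shows "1/(D-h)^Suc (Suc 0) - 1/D^Suc (Suc 0) - h*(2*(1/D^Suc (Suc (Suc 0)))) = h\<^sup>2*(3*D-2*h) / ((D-h)\<^sup>2*D^3)"
proof -
  have a: "D - h \<noteq> 0" "D \<noteq> 0" using assms by auto
  show ?thesis using a
    by (simp add: divide_simps power2_eq_square power3_eq_cube) (simp add: algebra_simps)
qed

lemma e2_bd:
  fixes D h \<delta> :: real assumes "\<delta> > 0" "D \<ge> \<delta>" "\<bar>h\<bar> < \<delta>/2"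
  shows "\<bar>h\<^sup>2*(3*D-2*h) / ((D-h)\<^sup>2*D^3)\<bar> \<le> (16*h\<^sup>2/\<delta>^3) / D"
proof -
  have D0: "D > 0" using assms by simp
  have Dh: "D - h \<ge> D/2" using assms by simp
  have N: "\<bar>3*D-2*h\<bar> \<le> 4*D" using assms by simp
  have P1: "(D/2)\<^sup>2 \<le> (D-h)\<^sup>2" using Dh D0 by (intro power_mono) auto
  have "\<delta>^3 \<le> D^3" using assms by (intro power_mono) auto
  have den: "(D-h)\<^sup>2*D^3 \<ge> (D/2)\<^sup>2 * D^3" using P1 D0 by (intro mult_right_mono) auto
  have den0: "(D/2)\<^sup>2 * D^3 > 0" using D0 by simp
  have "\<bar>h\<^sup>2*(3*D-2*h) / ((D-h)\<^sup>2*D^3)\<bar> = h\<^sup>2*\<bar>3*D-2*h\<bar> / ((D-h)\<^sup>2*D^3)"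
    using D0 Dh by (simp add: abs_mult abs_divide)
  also have "\<dots> \<le> h\<^sup>2*(4*D) / ((D-h)\<^sup>2*D^3)"
    using N den den0 by (intro divide_right_mono mult_left_mono) auto
  also have "\<dots> \<le> h\<^sup>2*(4*D) / ((D/2)\<^sup>2 * D^3)"
    using den den0 D0 by (intro divide_left_mono mult_pos_pos) auto
  also have "\<dots> = (16*h\<^sup>2/D^3) / D" using D0 by (simp add: field_simps power2_eq_square power3_eq_cube)
  also have "\<dots> \<le> (16*h\<^sup>2/\<delta>^3) / D"
  proof -
    have "16*h\<^sup>2/D^3 \<le> 16*h\<^sup>2/\<delta>^3"
      using \<open>\<delta>^3 \<le> D^3\<close> assms by (intro divide_left_mono) auto
    thus ?thesis using D0 by (intro divide_right_mono) auto
  qed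
  finally show ?thesis .
qed

lemma K1_deriv:
  assumes m: "m > 0" and g: "\<gamma> < 4*m\<^sup>2"
  shows "(K m (Suc 0) has_real_derivative K m (Suc (Suc 0)) \<gamma>) (at \<gamma>)"
proof -
  define \<delta> where "\<delta> = 4*m\<^sup>2 - \<gamma>"
  have d0: "\<delta> > 0" using g by (simp add: \<delta>_def)
  show ?thesis
  proof (rule deriv_from_quad[where r="\<delta>/2" and B="2*K m (Suc 0) \<gamma>/\<delta>\<^sup>2"])
    show "\<delta>/2 > 0" using d0 by simp
    fix h :: real assume h: "h \<noteq> 0" "\<bar>h\<bar> < \<delta>/2"
    have gh: "\<gamma> + h < 4*m\<^sup>2" using h d0 unfolding \<delta>_def by simp
    have "\<bar>K m (Suc 0) (\<gamma>+h) - K m (Suc 0) \<gamma> - h*(1*K m (Suc (Suc 0)) \<gamma>)\<bar> \<le> (2*h\<^sup>2/\<delta>\<^sup>2) * K m 1 \<gamma>"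
    proof (rule quad_generic[OF m g gh, where e="\<lambda>M. h\<^sup>2 / (((M-\<gamma>)-h)*(M-\<gamma>)\<^sup>2)"])
      show "(\<lambda>M. h\<^sup>2 / (((M-\<gamma>)-h)*(M-\<gamma>)\<^sup>2)) \<in> borel_measurable borel" by measurable
      fix M assume M: "M \<ge> 4*m\<^sup>2"
      have D: "M - \<gamma> \<ge> \<delta>" using M unfolding \<delta>_def by simp
      have D0: "M - \<gamma> > 0" "(M - \<gamma>) - h > 0" using D d0 h by auto
      show "1/(M-(\<gamma>+h))^Suc 0 - 1/(M-\<gamma>)^Suc 0 - h*(1*(1/(M-\<gamma>)^Suc (Suc 0))) = h\<^sup>2 / (((M-\<gamma>)-h)*(M-\<gamma>)\<^sup>2)"
        using e1_eq[OF D0] by (simp add: diff_diff_eq)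
      show "\<bar>h\<^sup>2 / (((M-\<gamma>)-h)*(M-\<gamma>)\<^sup>2)\<bar> \<le> (2*h\<^sup>2/\<delta>\<^sup>2) / (M-\<gamma>)"
        using e1_bd[OF d0 D h(2)] .
    qed
    thus "\<bar>K m (Suc 0) (\<gamma>+h) - K m (Suc 0) \<gamma> - h*K m (Suc (Suc 0)) \<gamma>\<bar> \<le> (2*K m (Suc 0) \<gamma>/\<delta>\<^sup>2) * h\<^sup>2"
      by (simp add: field_simps)
  qed
qed

lemma K2_deriv:
  assumes m: "m > 0" and g: "\<gamma> < 4*m\<^sup>2"
  shows "(K m (Suc (Suc 0)) has_real_derivative 2 * K m (Suc (Suc (Suc 0))) \<gamma>) (at \<gamma>)"
proof -
  define \<delta> where "\<delta> = 4*m\<^sup>2 - \<gamma>"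
  have d0: "\<delta> > 0" using g by (simp add: \<delta>_def)
  show ?thesis
  proof (rule deriv_from_quad[where r="\<delta>/2" and B="16*K m (Suc 0) \<gamma>/\<delta>^3"])
    show "\<delta>/2 > 0" using d0 by simp
    fix h :: real assume h: "h \<noteq> 0" "\<bar>h\<bar> < \<delta>/2"
    have gh: "\<gamma> + h < 4*m\<^sup>2" using h d0 unfolding \<delta>_def by simp
    have "\<bar>K m (Suc (Suc 0)) (\<gamma>+h) - K m (Suc (Suc 0)) \<gamma> - h*(2*K m (Suc (Suc (Suc 0))) \<gamma>)\<bar> \<le> (16*h\<^sup>2/\<delta>^3) * K m 1 \<gamma>"
    proof (rule quad_generic[OF m g gh, where e="\<lambda>M. h\<^sup>2*(3*(M-\<gamma>)-2*h) / (((M-\<gamma>)-h)\<^sup>2*(M-\<gamma>)^3)"])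
      show "(\<lambda>M. h\<^sup>2*(3*(M-\<gamma>)-2*h) / (((M-\<gamma>)-h)\<^sup>2*(M-\<gamma>)^3)) \<in> borel_measurable borel" by measurable
      fix M assume M: "M \<ge> 4*m\<^sup>2"
      have D: "M - \<gamma> \<ge> \<delta>" using M unfolding \<delta>_def by simp
      have D0: "M - \<gamma> > 0" "(M - \<gamma>) - h > 0" using D d0 h by auto
      show "1/(M-(\<gamma>+h))^Suc (Suc 0) - 1/(M-\<gamma>)^Suc (Suc 0) - h*(2*(1/(M-\<gamma>)^Suc (Suc (Suc 0)))) = h\<^sup>2*(3*(M-\<gamma>)-2*h) / (((M-\<gamma>)-h)\<^sup>2*(M-\<gamma>)^3)"
        using e2_eq[OF D0] by (simp add: diff_diff_eq)
      show "\<bar>h\<^sup>2*(3*(M-\<gamma>)-2*h) / (((M-\<gamma>)-h)\<^sup>2*(M-\<gamma>)^3)\<bar> \<le> (16*h\<^sup>2/\<delta>^3) / (M-\<gamma>)"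
        using e2_bd[OF d0 D h(2)] .
    qed
    thus "\<bar>K m (Suc (Suc 0)) (\<gamma>+h) - K m (Suc (Suc 0)) \<gamma> - h*(2*K m (Suc (Suc (Suc 0))) \<gamma>)\<bar> \<le> (16*K m (Suc 0) \<gamma>/\<delta>^3) * h\<^sup>2"
      by (simp add: field_simps)
  qed
qed

lemma set_integral_ge_interval:
  fixes f :: "real \<Rightarrow> real"
  assumes int: "set_integrable lborel S f" and sub: "{p..q} \<subseteq> S" and pq: "p \<le> q"
    and nn: "\<And>x. x \<in> S \<Longrightarrow> 0 \<le> f x" and lb: "\<And>x. x \<in> {p..q} \<Longrightarrow> c \<le> f x"
  shows "c * (q - p) \<le> (LINT x:S|lborel. f x)"
proof -
  have ind: "\<And>x. indicator S x * (indicator {p..q} x * c) = indicator {p..q} x * (c::real)"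
    using sub by (auto simp: indicator_def)
  have i2: "set_integrable lborel S (\<lambda>x. indicator {p..q} x * c)"
  proof -
    have "emeasure lborel {p..q} = ennreal (q-p)" using pq by simp
    hence "emeasure lborel {p..q} < \<infinity>" by simp
    hence "integrable lborel (indicat_real {p..q})" by (intro integrable_real_indicator) auto
    thus ?thesis unfolding set_integrable_def by (simp add: ind)
  qed
  have "(LINT x:S|lborel. indicator {p..q} x * c) = (LBINT x. indicator {p..q} x * c)"
    unfolding set_lebesgue_integral_def by (simp add: ind)
  also have "\<dots> = c * (q - p)" using pq by simp
  finally have e: "(LINT x:S|lborel. indicator {p..q} x * c) = c * (q - p)" .
  have "(LINT x:S|lborel. indicator {p..q} x * c) \<le> (LINT x:S|lborel. f x)"
  proof (rule set_integral_mono[OF i2 int])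
    fix x assume "x \<in> S" thus "indicator {p..q} x * c \<le> f x"
      using nn lb by (auto simp: indicator_def)
  qed
  thus ?thesis using e by linarith
qed

definition A1 where "A1 m a1 a2 \<gamma> = (2*\<gamma> - a1 - a2) * K m (Suc 0) \<gamma> + (a1-\<gamma>)*(a2-\<gamma>) * K m (Suc (Suc 0)) \<gamma>"
definition A2 where "A2 m a1 a2 \<gamma> = 2*K m (Suc 0) \<gamma> + 2*(2*\<gamma>-a1-a2)*K m (Suc (Suc 0)) \<gamma> + 2*((a1-\<gamma>)*(a2-\<gamma>))*K m (Suc (Suc (Suc 0))) \<gamma>"

lemma A_eq: "A m a1 a2 = (\<lambda>\<gamma>. (a1-\<gamma>)*(a2-\<gamma>)*K m (Suc 0) \<gamma>)"
  by (auto simp: A_def J_def K_def fun_eq_iff)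

lemma A_deriv:
  assumes m: "m > 0" and g: "\<gamma> < 4*m\<^sup>2"
  shows "(A m a1 a2 has_real_derivative A1 m a1 a2 \<gamma>) (at \<gamma>)"
  unfolding A_eq
  by (auto intro!: derivative_eq_intros K1_deriv[OF m g] simp: A1_def algebra_simps)

lemma A1_deriv:
  assumes m: "m > 0" and g: "\<gamma> < 4*m\<^sup>2"
  shows "(A1 m a1 a2 has_real_derivative A2 m a1 a2 \<gamma>) (at \<gamma>)"
  unfolding A1_def[abs_def]
  by (auto intro!: derivative_eq_intros K1_deriv[OF m g] K2_deriv[OF m g] simp: A2_def algebra_simps)

lemma deriv_A:
  assumes m: "m > 0" and g: "\<gamma> < 4*m\<^sup>2"
  shows "deriv (A m a1 a2) \<gamma> = A1 m a1 a2 \<gamma>"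
  using A_deriv[OF m g] by (rule DERIV_imp_deriv)

lemma deriv_A_deriv:
  assumes m: "m > 0" and g: "\<gamma> < 4*m\<^sup>2"
  shows "(deriv (A m a1 a2) has_real_derivative A2 m a1 a2 \<gamma>) (at \<gamma>)"
proof (rule has_field_derivative_transform_within_open[OF A1_deriv[OF m g], where S="{..<4*m\<^sup>2}"])
  show "open {..<4*m\<^sup>2}" by simp
  show "\<gamma> \<in> {..<4*m\<^sup>2}" using g by simp
  fix x :: real assume "x \<in> {..<4*m\<^sup>2}"
  thus "A1 m a1 a2 x = deriv (A m a1 a2) x" using deriv_A[OF m, of x] by simp
qed

lemma A2_integral:
  assumes m: "m > 0" and g: "\<gamma> < 4*m\<^sup>2"
  shows "(LINT M:{4 * m\<^sup>2..}|lborel. rho m M * (2 * (M - a1) * (M - a2) / (M - \<gamma>) ^ 3)) = A2 m a1 a2 \<gamma>"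
proof -
  define S where "S = {4*m\<^sup>2..}"
  define f1 where "f1 = (\<lambda>M. rho m M / (M-\<gamma>)^Suc 0)"
  define f2 where "f2 = (\<lambda>M. rho m M / (M-\<gamma>)^Suc (Suc 0))"
  define f3 where "f3 = (\<lambda>M. rho m M / (M-\<gamma>)^Suc (Suc (Suc 0)))"
  have i1: "set_integrable lborel S f1" unfolding S_def f1_def by (rule K_int[OF m g])
  have i2: "set_integrable lborel S f2" unfolding S_def f2_def by (rule K_int[OF m g])
  have i3: "set_integrable lborel S f3" unfolding S_def f3_def by (rule K_int[OF m g])
  define c2 where "c2 = 2*(2*\<gamma>-a1-a2)"
  define c3 where "c3 = 2*((a1-\<gamma>)*(a2-\<gamma>))"
  have i1': "set_integrable lborel S (\<lambda>M. 2 * f1 M)" using i1 by auto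
  have i2': "set_integrable lborel S (\<lambda>M. c2 * f2 M)" using i2 by auto
  have i3': "set_integrable lborel S (\<lambda>M. c3 * f3 M)" using i3 by auto
  have "(LINT M:S|lborel. rho m M * (2 * (M - a1) * (M - a2) / (M - \<gamma>) ^ 3))
      = (LINT M:S|lborel. (2 * f1 M + c2 * f2 M) + c3 * f3 M)"
  proof (rule set_lebesgue_integral_cong)
    show "S \<in> sets lborel" unfolding S_def by simp
    show "\<forall>M. M \<in> S \<longrightarrow> rho m M * (2 * (M - a1) * (M - a2) / (M - \<gamma>) ^ 3) = (2 * f1 M + c2 * f2 M) + c3 * f3 M"
    proof (intro allI impI)
      fix M assume "M \<in> S"
      hence D0: "M - \<gamma> \<noteq> 0" using g unfolding S_def by auto
      show "rho m M * (2 * (M - a1) * (M - a2) / (M - \<gamma>) ^ 3) = (2 * f1 M + c2 * f2 M) + c3 * f3 M"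
        unfolding f1_def f2_def f3_def c2_def c3_def using D0
        by (simp add: divide_simps power3_eq_cube power2_eq_square) (simp add: algebra_simps)
    qed
  qed
  also have "\<dots> = (LINT M:S|lborel. 2 * f1 M + c2 * f2 M) + (LINT M:S|lborel. c3 * f3 M)"
    using i1' i2' i3' by (intro set_integral_add(2)) auto
  also have "\<dots> = 2 * (LINT M:S|lborel. f1 M) + c2 * (LINT M:S|lborel. f2 M) + c3 * (LINT M:S|lborel. f3 M)"
    using i1' i2' by (simp add: set_integral_add(2))
  also have "\<dots> = A2 m a1 a2 \<gamma>" unfolding A2_def K_def S_def f1_def f2_def f3_def c2_def c3_def ..
  finally show ?thesis unfolding S_def .
qed

lemma A2_int:
  assumes m: "m > 0" and g: "\<gamma> < 4*m\<^sup>2"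
  shows "set_integrable lborel {4 * m\<^sup>2..} (\<lambda>M. rho m M * (2 * (M - a1) * (M - a2) / (M - \<gamma>) ^ 3))"
proof -
  define S where "S = {4*m\<^sup>2..}"
  define f1 where "f1 = (\<lambda>M. rho m M / (M-\<gamma>)^Suc 0)"
  define f2 where "f2 = (\<lambda>M. rho m M / (M-\<gamma>)^Suc (Suc 0))"
  define f3 where "f3 = (\<lambda>M. rho m M / (M-\<gamma>)^Suc (Suc (Suc 0)))"
  have i1: "set_integrable lborel S f1" unfolding S_def f1_def by (rule K_int[OF m g])
  have i2: "set_integrable lborel S f2" unfolding S_def f2_def by (rule K_int[OF m g])
  have i3: "set_integrable lborel S f3" unfolding S_def f3_def by (rule K_int[OF m g])
  define c2 where "c2 = 2*(2*\<gamma>-a1-a2)"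
  define c3 where "c3 = 2*((a1-\<gamma>)*(a2-\<gamma>))"
  have "set_integrable lborel S (\<lambda>M. (2 * f1 M + c2 * f2 M) + c3 * f3 M)"
    using i1 i2 i3 by (intro set_integral_add(1) set_integrable_mult_right) auto
  moreover have "\<And>M. indicator S M *\<^sub>R ((2 * f1 M + c2 * f2 M) + c3 * f3 M) =
      indicator S M *\<^sub>R (rho m M * (2 * (M - a1) * (M - a2) / (M - \<gamma>) ^ 3))"
  proof -
    fix M
    show "indicator S M *\<^sub>R ((2 * f1 M + c2 * f2 M) + c3 * f3 M) =
      indicator S M *\<^sub>R (rho m M * (2 * (M - a1) * (M - a2) / (M - \<gamma>) ^ 3))"
    proof (cases "M \<in> S")
      case True
      hence D0: "M - \<gamma> \<noteq> 0" using g unfolding S_def by auto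
      have "rho m M * (2 * (M - a1) * (M - a2) / (M - \<gamma>) ^ 3) = (2 * f1 M + c2 * f2 M) + c3 * f3 M"
        unfolding f1_def f2_def f3_def c2_def c3_def using D0
        by (simp add: divide_simps power3_eq_cube power2_eq_square) (simp add: algebra_simps)
      thus ?thesis by simp
    qed simp
  qed
  ultimately show ?thesis unfolding set_integrable_def S_def by simp
qed

lemma A2_pos:
  assumes m: "m > 0" and g: "\<gamma> < 4*m\<^sup>2" and a1: "a1 < 4*m\<^sup>2" and a2: "a2 < 4*m\<^sup>2"
  shows "(LINT M:{4 * m\<^sup>2..}|lborel. rho m M * (2 * (M - a1) * (M - a2) / (M - \<gamma>) ^ 3)) > 0"
proof -
  define s where "s = 4*m\<^sup>2"
  have s0: "s > 0" using m by (simp add: s_def)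
  define rlow where "rlow = (1/(16*pi\<^sup>2)) * sqrt (1/2) * (1/(3 * s))"
  define c0 where "c0 = rlow * (2*(s-a1)*(s-a2)/(3 * s-\<gamma>)^3)"
  have rlow0: "rlow > 0" unfolding rlow_def using s0 by simp
  have "s - a1 > 0" "s - a2 > 0" "3 * s - \<gamma> > 0" using a1 a2 g s0 unfolding s_def by (auto simp: power2_eq_square)
  hence q0: "2*(s-a1)*(s-a2)/(3 * s-\<gamma>)^3 > 0" by simp
  have c00: "c0 > 0" unfolding c0_def using rlow0 q0 by (intro mult_pos_pos)
  have "c0 * (3 * s - 2 * s) \<le> (LINT M:{s..}|lborel. rho m M * (2 * (M - a1) * (M - a2) / (M - \<gamma>) ^ 3))"
  proof (rule set_integral_ge_interval)
    show "set_integrable lborel {s..} (\<lambda>M. rho m M * (2 * (M - a1) * (M - a2) / (M - \<gamma>) ^ 3))"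
      unfolding s_def by (rule A2_int[OF m g])
    show "{2 * s..3 * s} \<subseteq> {s..}" using s0 by auto
    show "2 * s \<le> 3 * s" using s0 by simp
  next
    fix M assume "M \<in> {s..}"
    hence M: "M \<ge> s" by simp
    have "rho m M \<ge> 0" using rho_nonneg[OF m] M unfolding s_def by simp
    moreover have "2 * (M - a1) * (M - a2) / (M - \<gamma>) ^ 3 \<ge> 0" using M a1 a2 g unfolding s_def by simp
    ultimately show "0 \<le> rho m M * (2 * (M - a1) * (M - a2) / (M - \<gamma>) ^ 3)" by (rule mult_nonneg_nonneg)
  next
    fix M assume "M \<in> {2 * s..3 * s}"
    hence M: "2 * s \<le> M" "M \<le> 3 * s" by auto
    have M0: "M > 0" using M s0 by simp
    have "s / M \<le> 1/2" using M M0 s0 by (simp add: divide_simps)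
    hence "sqrt (1/2) \<le> sqrt (1 - s/M)" by simp
    moreover have "1/(3 * s) \<le> 1/M" using M M0 by (simp add: divide_simps)
    moreover have "0 \<le> sqrt (1 - s/M)" proof - have "s / M \<le> 1/2" by fact hence "0 \<le> 1 - s/M" by linarith thus ?thesis by simp qed
    ultimately have r: "rlow \<le> rho m M" unfolding rlow_def rho_def s_def[symmetric]
      using s0 M0 by (intro mult_mono) auto
    have n: "2*(s-a1)*(s-a2) \<le> 2 * (M - a1) * (M - a2)" using M a1 a2 s0 unfolding s_def[symmetric]
      by (intro mult_mono) auto
    have d: "(M-\<gamma>)^3 \<le> (3 * s-\<gamma>)^3" using M g unfolding s_def[symmetric] by (intro power_mono) auto
    have "2*(s-a1)*(s-a2)/(3 * s-\<gamma>)^3 \<le> 2 * (M - a1) * (M - a2) / (M - \<gamma>) ^ 3"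
      using n d a1 a2 g M unfolding s_def[symmetric] by (intro frac_le) auto
    thus "c0 \<le> rho m M * (2 * (M - a1) * (M - a2) / (M - \<gamma>) ^ 3)" unfolding c0_def
      using r rlow0 q0 by (intro mult_mono) auto
  qed
  moreover have "c0 * (3 * s - 2 * s) > 0" using c00 s0 by simp
  ultimately show ?thesis unfolding s_def by linarith
qed

lemma K_nonneg:
  assumes m: "m > 0" and g: "\<gamma> < 4*m\<^sup>2"
  shows "K m (Suc n) \<gamma> \<ge> 0"
proof -
  have "(LINT M:{4*m\<^sup>2..}|lborel. (0::real)) \<le> (LINT M:{4*m\<^sup>2..}|lborel. rho m M / (M - \<gamma>) ^ Suc n)"
  proof (rule set_integral_mono)
    show "set_integrable lborel {4*m\<^sup>2..} (\<lambda>M. 0::real)" by (simp add: set_integrable_def)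
    show "set_integrable lborel {4*m\<^sup>2..} (\<lambda>M. rho m M / (M - \<gamma>) ^ Suc n)" by (rule K_int[OF m g])
    fix M assume "M \<in> {4*m\<^sup>2..}"
    thus "0 \<le> rho m M / (M - \<gamma>) ^ Suc n" using rho_nonneg[OF m, of M] g by simp
  qed
  thus ?thesis unfolding K_def by simp
qed

lemma set_integral_ge_sub:
  fixes f g :: "real \<Rightarrow> real"
  assumes intf: "set_integrable lborel S f" and intg: "set_integrable lborel T g" and sub: "T \<subseteq> S"
    and nn: "\<And>x. x \<in> S \<Longrightarrow> 0 \<le> f x" and lb: "\<And>x. x \<in> T \<Longrightarrow> g x \<le> f x"
  shows "(LINT x:T|lborel. g x) \<le> (LINT x:S|lborel. f x)"
  unfolding set_lebesgue_integral_def
proof (rule integral_mono)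
  show "integrable lborel (\<lambda>x. indicat_real T x *\<^sub>R g x)" using intg unfolding set_integrable_def .
  show "integrable lborel (\<lambda>x. indicat_real S x *\<^sub>R f x)" using intf unfolding set_integrable_def .
  fix x show "indicat_real T x *\<^sub>R g x \<le> indicat_real S x *\<^sub>R f x"
    using sub nn lb by (auto simp: indicator_def)
qed

lemma integral_inv:
  fixes p q :: real assumes "0 < p" "p \<le> q"
  shows "set_integrable lborel {p..q} (\<lambda>x. 1 / x)" "(LINT x:{p..q}|lborel. 1 / x) = ln q - ln p"
proof -
  have c: "continuous_on {p..q} (\<lambda>x. 1 / x)" using assms by (intro continuous_intros) auto
  show "set_integrable lborel {p..q} (\<lambda>x. 1 / x)"
    using borel_integrable_atLeastAtMost'[OF c] .
  have "(LBINT x=p..q. 1 / x) = ln q - ln p"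
  proof (rule interval_integral_FTC_finite)
    show "continuous_on {min p q..max p q} (\<lambda>x. 1 / x)" using c assms by simp
    fix x assume "min p q \<le> x" "x \<le> max p q"
    hence "x > 0" using assms by simp
    thus "(ln has_vector_derivative 1 / x) (at x within {min p q..max p q})"
      by (auto intro!: derivative_eq_intros simp flip: has_real_derivative_iff_has_vector_derivative)
  qed
  thus "(LINT x:{p..q}|lborel. 1 / x) = ln q - ln p" using interval_integral_Icc[OF assms(2), of "\<lambda>x. 1 / x"] by simp
qed

lemma K2_lower:
  assumes m: "m > 0" and d0: "0 < \<delta>" and d1: "\<delta> \<le> 2*m\<^sup>2"
  shows "K m (Suc (Suc 0)) (4*m\<^sup>2 - \<delta>) \<ge> (1/(16*pi\<^sup>2) / sqrt (2*(4*m\<^sup>2)) / (2*(4*m\<^sup>2)) / 9) / sqrt \<delta>"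
proof -
  define s where "s = 4*m\<^sup>2"
  have s0: "s > 0" using m by (simp add: s_def)
  have ds: "\<delta> \<le> s/2" using d1 by (simp add: s_def)
  define c where "c = 1/(16*pi\<^sup>2) * sqrt (\<delta>/(2 * s)) * (1/(2 * s)) * (1/(3*\<delta>)\<^sup>2)"
  have g: "s - \<delta> < 4*m\<^sup>2" using d0 by (simp add: s_def)
  have "c * ((s + 2*\<delta>) - (s + \<delta>)) \<le> (LINT M:{s..}|lborel. rho m M / (M - (s - \<delta>)) ^ Suc (Suc 0))"
  proof (rule set_integral_ge_interval)
    show "set_integrable lborel {s..} (\<lambda>M. rho m M / (M - (s - \<delta>)) ^ Suc (Suc 0))"
      unfolding s_def by (rule K_int[OF m g[unfolded s_def]])
    show "{s + \<delta>..s + 2*\<delta>} \<subseteq> {s..}" using d0 by auto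
    show "s + \<delta> \<le> s + 2*\<delta>" using d0 by simp
  next
    fix M assume "M \<in> {s..}"
    thus "0 \<le> rho m M / (M - (s - \<delta>)) ^ Suc (Suc 0)" using rho_nonneg[OF m, of M] d0 unfolding s_def by simp
  next
    fix M assume "M \<in> {s + \<delta>..s + 2*\<delta>}"
    hence M: "s + \<delta> \<le> M" "M \<le> s + 2*\<delta>" by auto
    have M0: "M > 0" using M s0 d0 by simp
    have M2: "M \<le> 2 * s" using M ds by simp
    have "\<delta>/(2 * s) \<le> (M - s)/M" using M M2 d0 s0 by (intro frac_le) auto
    also have "(M - s)/M = 1 - s/M" using M0 by (simp add: field_simps)
    finally have X: "\<delta>/(2 * s) \<le> 1 - s/M" .
    have X0: "0 \<le> \<delta>/(2 * s)" using d0 s0 by simp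
    have "sqrt (\<delta>/(2 * s)) \<le> sqrt (1 - s/M)" using X by simp
    moreover have "0 \<le> sqrt (1 - s/M)" using X X0 by simp
    moreover have "1/(2 * s) \<le> 1/M" using M2 M0 by (simp add: divide_simps)
    ultimately have r: "1/(16*pi\<^sup>2) * sqrt (\<delta>/(2 * s)) * (1/(2 * s)) \<le> rho m M"
      unfolding rho_def s_def[symmetric] using s0 X0 M0 by (intro mult_mono mult_left_mono) auto
    have "(M - (s - \<delta>))\<^sup>2 \<le> (3*\<delta>)\<^sup>2" using M d0 by (intro power_mono) auto
    hence "1/(3*\<delta>)\<^sup>2 \<le> 1/(M - (s - \<delta>))\<^sup>2" using M d0 by (intro divide_left_mono) auto
    moreover have "0 \<le> rho m M" using rho_nonneg[OF m, of M] M d0 unfolding s_def by simp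
    ultimately have "c \<le> rho m M * (1/(M - (s - \<delta>))\<^sup>2)" unfolding c_def using r s0 d0
      by (intro mult_mono) auto
    thus "c \<le> rho m M / (M - (s - \<delta>)) ^ Suc (Suc 0)" by (simp add: power2_eq_square)
  qed
  moreover have "c * ((s + 2*\<delta>) - (s + \<delta>)) = (1/(16*pi\<^sup>2) / sqrt (2 * s) / (2 * s) / 9) / sqrt \<delta>"
  proof -
    have sd: "sqrt \<delta> * sqrt \<delta> = \<delta>" using d0 by simp
    have "sqrt \<delta> > 0" using d0 by simp
    have sq: "sqrt \<delta> / \<delta> = 1 / sqrt \<delta>" using sd \<open>sqrt \<delta> > 0\<close> by (simp add: field_simps)
    have "c * ((s + 2*\<delta>) - (s + \<delta>)) = 1/(16*pi\<^sup>2) / sqrt (2 * s) / (2 * s) / 9 * (sqrt \<delta> / \<delta>)"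
      unfolding c_def using d0 s0 by (simp add: real_sqrt_divide power2_eq_square field_simps)
    also have "\<dots> = (1/(16*pi\<^sup>2) / sqrt (2 * s) / (2 * s) / 9) / sqrt \<delta>"
      unfolding sq by simp
    finally show ?thesis .
  qed
  moreover have "K m (Suc (Suc 0)) (s - \<delta>) = (LINT M:{s..}|lborel. rho m M / (M - (s - \<delta>)) ^ Suc (Suc 0))"
    unfolding K_def s_def ..
  ultimately have "(1/(16*pi\<^sup>2) / sqrt (2 * s) / (2 * s) / 9) / sqrt \<delta> \<le> K m (Suc (Suc 0)) (s - \<delta>)"
    by linarith
  thus ?thesis unfolding s_def .
qed

lemma lim_sqrt: fixes k s :: real assumes "k > 0" shows "filterlim (\<lambda>x. k / sqrt (s - x)) at_top (at_left s)"
  using assms by real_asymp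

lemma lim_ln: fixes k c :: real assumes "k > 0" shows "filterlim (\<lambda>x. k * (ln (-x) - ln c)) at_top at_bot"
  using assms by real_asymp

lemma lim_right:
  assumes m: "m > 0" and a1: "a1 < 4*m\<^sup>2" and a2: "a2 < 4*m\<^sup>2"
  shows "filterlim (A1 m a1 a2) at_top (at_left (4*m\<^sup>2))"
proof -
  define s where "s = 4*m\<^sup>2"
  have s0: "s > 0" using m by (simp add: s_def)
  define k2 where "k2 = 1/(16*pi\<^sup>2) / sqrt (2*(4*m\<^sup>2)) / (2*(4*m\<^sup>2)) / 9"
  have k20: "k2 > 0" unfolding k2_def using m by simp
  define g0 where "g0 = max ((max a1 a2 + s)/2) (s/2)"
  have g0s: "g0 < s" unfolding g0_def using a1 a2 s0 unfolding s_def by auto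
  define p0 where "p0 = (g0 - a1)*(g0 - a2)"
  have ma: "max a1 a2 < s" using a1 a2 unfolding s_def by simp
  have "g0 \<ge> (max a1 a2 + s)/2" unfolding g0_def by simp
  hence ga: "g0 > a1" "g0 > a2" using ma by (simp_all add: max_def split: if_splits)
  have p00: "p0 > 0" unfolding p0_def using ga by simp
  have lim: "filterlim (\<lambda>x. (p0 * k2) / sqrt (s - x)) at_top (at_left s)"
    using p00 k20 by (intro lim_sqrt mult_pos_pos)
  have ev: "eventually (\<lambda>x. x > g0 \<and> x < s) (at_left s)"
    using eventually_at_left_real[OF g0s] by (simp add: greaterThanLessThan_iff)
  have "eventually (\<lambda>x. (p0 * k2) / sqrt (s - x) \<le> A1 m a1 a2 x) (at_left s)"
    using ev
  proof eventually_elim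
    case (elim x)
    hence x: "g0 < x" "x < s" by auto
    have xa: "x > a1" "x > a2" using x ga by auto
    have k1: "K m (Suc 0) x \<ge> 0" using K_nonneg[OF m, of x 0] x unfolding s_def by simp
    have k2: "K m (Suc (Suc 0)) x \<ge> k2 / sqrt (s - x)"
      using K2_lower[OF m, of "s - x"] x unfolding k2_def s_def g0_def by auto
    have "p0 \<le> (a1 - x)*(a2 - x)"
    proof -
      have "p0 = (g0 - a1)*(g0 - a2)" by (simp add: p0_def)
      also have "\<dots> \<le> (x - a1)*(x - a2)" using x ga by (intro mult_mono) auto
      also have "\<dots> = (a1 - x)*(a2 - x)" by (simp add: algebra_simps)
      finally show ?thesis .
    qed
    have "(p0 * k2) / sqrt (s - x) = p0 * (k2 / sqrt (s - x))" by simp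
    also have "\<dots> \<le> (a1 - x)*(a2 - x) * K m (Suc (Suc 0)) x"
      using \<open>p0 \<le> _\<close> k2 p00 k20 x by (intro mult_mono) auto
    also have "\<dots> \<le> A1 m a1 a2 x" unfolding A1_def using xa k1 by simp
    finally show ?case .
  qed
  from filterlim_at_top_mono[OF lim this] show ?thesis unfolding s_def .
qed

lemma A1_upper:
  assumes m: "m > 0" and a1: "a1 < 4*m\<^sup>2" and a2: "a2 < 4*m\<^sup>2" and ga: "\<gamma> < min a1 a2"
  shows "A1 m a1 a2 \<gamma> \<le> - (min a1 a2 - \<gamma>) * K m (Suc 0) \<gamma>"
proof -
  define a where "a = min a1 a2"
  define S where "S = {4*m\<^sup>2..}"
  have g: "\<gamma> < 4*m\<^sup>2" using ga a1 by simp
  define f1 where "f1 = (\<lambda>M. rho m M / (M-\<gamma>)^Suc 0)"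
  define f2 where "f2 = (\<lambda>M. rho m M / (M-\<gamma>)^Suc (Suc 0))"
  have i1: "set_integrable lborel S f1" unfolding S_def f1_def by (rule K_int[OF m g])
  have i2: "set_integrable lborel S f2" unfolding S_def f2_def by (rule K_int[OF m g])
  define c1 where "c1 = 2*\<gamma> - a1 - a2"
  define c2 where "c2 = (a1-\<gamma>)*(a2-\<gamma>)"
  have i12: "set_integrable lborel S (\<lambda>M. c1 * f1 M + c2 * f2 M)" using i1 i2 by auto
  have i1': "set_integrable lborel S (\<lambda>M. (-(a - \<gamma>)) * f1 M)" using i1 by auto
  have i1c: "set_integrable lborel S (\<lambda>M. c1 * f1 M)" using i1 by auto
  have i2c: "set_integrable lborel S (\<lambda>M. c2 * f2 M)" using i2 by auto
  have "A1 m a1 a2 \<gamma> = c1 * (LINT M:S|lborel. f1 M) + c2 * (LINT M:S|lborel. f2 M)"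
    unfolding A1_def K_def S_def f1_def f2_def c1_def c2_def ..
  also have "\<dots> = (LINT M:S|lborel. c1 * f1 M) + (LINT M:S|lborel. c2 * f2 M)"
    unfolding set_integral_mult_right ..
  also have "\<dots> = (LINT M:S|lborel. c1 * f1 M + c2 * f2 M)"
    using i1c i2c by (rule set_integral_add(2)[symmetric])
  finally have "A1 m a1 a2 \<gamma> = (LINT M:S|lborel. c1 * f1 M + c2 * f2 M)" .
  also have "\<dots> \<le> (LINT M:S|lborel. (-(a - \<gamma>)) * f1 M)"
  proof (rule set_integral_mono[OF i12 i1'])
    fix M assume "M \<in> S"
    hence M: "M \<ge> 4*m\<^sup>2" unfolding S_def by simp
    have r0: "rho m M \<ge> 0" using rho_nonneg[OF m M] .
    have D0: "M - \<gamma> > 0" using M g by simp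
    have x1: "0 < M - a1" "M - a1 \<le> M - a" using M a1 unfolding a_def by auto
    have x2: "0 < M - a2" "M - a2 \<le> M - a" using M a2 unfolding a_def by auto
    have "(M-a1)*(M-a2) \<le> (M-a)*(M-a)" using x1 x2 by (intro mult_mono) auto
    moreover have "(M-a)*(M-a) - (M-\<gamma>)^2 + (a-\<gamma>)*(M-\<gamma>) = (a-\<gamma>)*(a-M)"
      by (simp add: algebra_simps power2_eq_square)
    moreover have "(a-\<gamma>)*(a-M) \<le> 0" using ga x1 unfolding a_def
      by (intro mult_nonneg_nonpos) auto
    moreover have "c1*(M-\<gamma>) + c2 = (M-a1)*(M-a2) - (M-\<gamma>)^2"
      unfolding c1_def c2_def by (simp add: algebra_simps power2_eq_square)
    ultimately have key: "c1*(M-\<gamma>) + c2 \<le> -(a-\<gamma>)*(M-\<gamma>)" by linarith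
    have "c1 * f1 M + c2 * f2 M = rho m M * ((c1*(M-\<gamma>) + c2) / (M-\<gamma>)^2)"
    proof -
      have "M - \<gamma> \<noteq> 0" using D0 by simp
      thus ?thesis unfolding f1_def f2_def
        by (simp add: divide_simps power2_eq_square) (simp add: algebra_simps)
    qed
    also have "\<dots> \<le> rho m M * ((-(a-\<gamma>)*(M-\<gamma>)) / (M-\<gamma>)^2)"
      using key D0 r0 by (intro mult_left_mono divide_right_mono) auto
    also have "\<dots> = (-(a - \<gamma>)) * f1 M"
    proof -
      have "M - \<gamma> \<noteq> 0" using D0 by simp
      thus ?thesis unfolding f1_def by (simp add: divide_simps power2_eq_square)
    qed
    finally show "c1 * f1 M + c2 * f2 M \<le> (-(a - \<gamma>)) * f1 M" .
  qed
  also have "\<dots> = - (min a1 a2 - \<gamma>) * K m (Suc 0) \<gamma>"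
    unfolding K_def S_def f1_def a_def set_integral_mult_right ..
  finally show ?thesis .
qed

lemma K1_lower_ln:
  assumes m: "m > 0" and gl: "\<gamma> \<le> - 2 * (4*m\<^sup>2)"
  shows "K m (Suc 0) \<gamma> \<ge> ((1/(16*pi\<^sup>2)) * sqrt (1/2) / 2 / (-\<gamma>)) * (ln (-\<gamma>) - ln (2 * (4*m\<^sup>2)))"
proof -
  define s where "s = 4*m\<^sup>2"
  have s0: "s > 0" using m by (simp add: s_def)
  define u where "u = -\<gamma>"
  have us: "u \<ge> 2 * s" using gl unfolding u_def s_def by simp
  have u0: "u > 0" using us s0 by simp
  have g: "\<gamma> < 4*m\<^sup>2" using gl s0 unfolding s_def by linarith
  define k where "k = (1/(16*pi\<^sup>2)) * sqrt (1/2) / 2 / u"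
  have k0: "k > 0" unfolding k_def using u0 by simp
  have "set_integrable lborel {2 * s..u} (\<lambda>M. 1 / M)"
    by (rule integral_inv(1)) (use s0 us in auto)
  hence il: "set_integrable lborel {2 * s..u} (\<lambda>M. k * (1 / M))"
    by (rule set_integrable_mult_right)
  have "(LINT M:{2 * s..u}|lborel. k * (1 / M)) \<le> (LINT M:{s..}|lborel. rho m M / (M - \<gamma>) ^ Suc 0)"
  proof (rule set_integral_ge_sub[OF _ il])
    show "set_integrable lborel {s..} (\<lambda>M. rho m M / (M - \<gamma>) ^ Suc 0)"
      unfolding s_def by (rule K_int[OF m g])
    show "{2 * s..u} \<subseteq> {s..}" using s0 by auto
  next
    fix M assume "M \<in> {s..}"
    thus "0 \<le> rho m M / (M - \<gamma>) ^ Suc 0" using rho_nonneg[OF m, of M] g unfolding s_def by simp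
  next
    fix M assume "M \<in> {2 * s..u}"
    hence M: "2 * s \<le> M" "M \<le> u" by auto
    have M0: "M > 0" using M s0 by simp
    have "s / M \<le> 1/2" using M M0 s0 by (simp add: divide_simps)
    hence h1: "1/2 \<le> 1 - s/M" by linarith
    hence "sqrt (1/2) \<le> sqrt (1 - s/M)" by simp
    hence r: "(1/(16*pi\<^sup>2)) * sqrt (1/2) * (1/M) \<le> rho m M"
      unfolding rho_def s_def[symmetric] using M0 by (intro mult_right_mono mult_left_mono) auto
    have "M - \<gamma> \<le> 2 * u" using M unfolding u_def by simp
    moreover have "M - \<gamma> > 0" using M0 u0 unfolding u_def by simp
    ultimately have d: "1/(2 * u) \<le> 1/(M - \<gamma>)" by (intro frac_le) auto
    have "k * (1/M) = ((1/(16*pi\<^sup>2)) * sqrt (1/2) * (1/M)) * (1/(2 * u))"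
      unfolding k_def by simp
    also have "\<dots> \<le> rho m M * (1/(M - \<gamma>))"
    proof (rule mult_mono)
      show "0 \<le> rho m M" using rho_nonneg[OF m, of M] M s0 unfolding s_def by simp
      show "0 \<le> 1 / (2 * u)" using u0 by simp
    qed (use r d in auto)
    finally show "k * (1 / M) \<le> rho m M / (M - \<gamma>) ^ Suc 0" by simp
  qed
  moreover have "(LINT M:{2 * s..u}|lborel. k * (1 / M)) = k * (ln u - ln (2 * s))"
  proof -
    have "(LINT M:{2 * s..u}|lborel. k * (1 / M)) = k * (LINT M:{2 * s..u}|lborel. 1 / M)"
      by (rule set_integral_mult_right)
    also have "(LINT M:{2 * s..u}|lborel. 1 / M) = ln u - ln (2 * s)"
      by (rule integral_inv(2)) (use s0 us in auto)
    finally show ?thesis .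
  qed
  moreover have "K m (Suc 0) \<gamma> = (LINT M:{s..}|lborel. rho m M / (M - \<gamma>) ^ Suc 0)"
    unfolding K_def s_def ..
  ultimately have "k * (ln u - ln (2 * s)) \<le> K m (Suc 0) \<gamma>" by linarith
  thus ?thesis unfolding k_def u_def s_def .
qed

lemma lim_left:
  assumes m: "m > 0" and a1: "a1 < 4*m\<^sup>2" and a2: "a2 < 4*m\<^sup>2"
  shows "filterlim (A1 m a1 a2) at_bot at_bot"
proof -
  define s where "s = 4*m\<^sup>2"
  have s0: "s > 0" using m by (simp add: s_def)
  define a where "a = min a1 a2"
  define k1 where "k1 = (1/(16*pi\<^sup>2)) * sqrt (1/2) / 2 / 2"
  have k10: "k1 > 0" unfolding k1_def by simp
  have lim: "filterlim (\<lambda>x. k1 * (ln (-x) - ln (2 * s))) at_top at_bot"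
    using k10 by (rule lim_ln)
  have ev: "eventually (\<lambda>x. x \<le> min (min (a - 1) (- 2 * s)) (2 * a)) at_bot"
    by (rule eventually_le_at_bot)
  have "eventually (\<lambda>x. k1 * (ln (-x) - ln (2 * s)) \<le> - A1 m a1 a2 x) at_bot"
    using ev
  proof eventually_elim
    case (elim x)
    hence x: "x < a" "x \<le> - 2 * s" "x \<le> 2 * a" by auto
    have x0: "-x > 0" using x s0 by simp
    have g: "x < 4*m\<^sup>2" using x s0 unfolding s_def[symmetric] by linarith
    have K0: "K m (Suc 0) x \<ge> 0" using K_nonneg[OF m g, of 0] by simp
    have up: "A1 m a1 a2 x \<le> - (a - x) * K m (Suc 0) x"
      using A1_upper[OF m a1 a2, of x] x unfolding a_def by simp
    have lo: "K m (Suc 0) x \<ge> ((1/(16*pi\<^sup>2)) * sqrt (1/2) / 2 / (-x)) * (ln (-x) - ln (2 * s))"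
      using K1_lower_ln[OF m, of x] x unfolding s_def by simp
    have "k1 * (ln (-x) - ln (2 * s)) = (-x/2) * (((1/(16*pi\<^sup>2)) * sqrt (1/2) / 2 / (-x)) * (ln (-x) - ln (2 * s)))"
      unfolding k1_def using x0 by (simp add: field_simps)
    also have "\<dots> \<le> (-x/2) * K m (Suc 0) x" using lo x0 by (intro mult_left_mono) auto
    also have "\<dots> \<le> (a - x) * K m (Suc 0) x" using K0 x by (intro mult_right_mono) auto
    also have "\<dots> \<le> - A1 m a1 a2 x" using up by (simp add: algebra_simps)
    finally show ?case .
  qed
  from filterlim_at_top_mono[OF lim this]
  have "filterlim (\<lambda>x. - A1 m a1 a2 x) at_top at_bot" .
  thus ?thesis by (simp add: filterlim_uminus_at_bot)
qed

theorem lemma4p10: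
  fixes m a1 a2 :: real
  assumes "m > 0"
    and "a1 < 4 * m\<^sup>2" and "a2 < 4 * m\<^sup>2"
  shows "(\<forall>\<gamma>\<in>{..<4 * m\<^sup>2}. A m a1 a2 differentiable (at \<gamma>))
    \<and> (\<forall>\<gamma>\<in>{..<4 * m\<^sup>2}.
          (deriv (A m a1 a2) has_real_derivative
             (LINT M:{4 * m\<^sup>2..}|lborel. rho m M * (2 * (M - a1) * (M - a2) / (M - \<gamma>) ^ 3))) (at \<gamma>)
        \<and> (LINT M:{4 * m\<^sup>2..}|lborel. rho m M * (2 * (M - a1) * (M - a2) / (M - \<gamma>) ^ 3)) > 0)
    \<and> convex_on {..<4 * m\<^sup>2} (A m a1 a2)
    \<and> mono_on {..<4 * m\<^sup>2} (deriv (A m a1 a2))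
    \<and> filterlim (deriv (A m a1 a2)) at_bot at_bot
    \<and> filterlim (deriv (A m a1 a2)) at_top (at_left (4 * m\<^sup>2))
    \<and> deriv (A m a1 a2) ` {..<4 * m\<^sup>2} = UNIV"
proof -
  note m = assms(1) and a1 = assms(2) and a2 = assms(3)
  define s where "s = 4 * m\<^sup>2"
  have dA: "\<And>\<gamma>. \<gamma> < s \<Longrightarrow> (A m a1 a2 has_real_derivative A1 m a1 a2 \<gamma>) (at \<gamma>)"
    using A_deriv[OF m] unfolding s_def by simp
  have dA1: "\<And>\<gamma>. \<gamma> < s \<Longrightarrow> (A1 m a1 a2 has_real_derivative A2 m a1 a2 \<gamma>) (at \<gamma>)"
    using A1_deriv[OF m] unfolding s_def by simp
  have eqd: "\<And>\<gamma>. \<gamma> < s \<Longrightarrow> deriv (A m a1 a2) \<gamma> = A1 m a1 a2 \<gamma>"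
    using deriv_A[OF m] unfolding s_def by simp
  have A2p: "A2 m a1 a2 \<gamma> > 0" if "\<gamma> < s" for \<gamma>
  proof -
    have g: "\<gamma> < 4 * m\<^sup>2" using that unfolding s_def .
    show ?thesis using A2_pos[OF m g a1 a2] A2_integral[OF m g] by simp
  qed
  have cont: "\<And>x y. y < s \<Longrightarrow> continuous_on {x..y} (A1 m a1 a2)"
  proof (rule has_real_derivative_imp_continuous_on)
    fix x y z assume "y < s" "z \<in> {x..y}"
    hence "z < s" by simp
    thus "(A1 m a1 a2 has_real_derivative A2 m a1 a2 z) (at z)" by (rule dA1)
  qed
  have monoA1: "\<And>x y. x \<le> y \<Longrightarrow> y < s \<Longrightarrow> A1 m a1 a2 x \<le> A1 m a1 a2 y"
  proof -
    fix x y :: real assume xy: "x \<le> y" "y < s"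
    show "A1 m a1 a2 x \<le> A1 m a1 a2 y"
    proof (rule DERIV_nonneg_imp_increasing_open[OF xy(1)])
      fix z assume "x < z" "z < y"
      hence "z < s" using xy by simp
      thus "\<exists>d. (A1 m a1 a2 has_real_derivative d) (at z) \<and> 0 \<le> d"
        using dA1 A2p less_imp_le by blast
    qed (rule cont[OF xy(2)])
  qed
  have P1: "\<forall>\<gamma>\<in>{..<s}. A m a1 a2 differentiable (at \<gamma>)"
    using dA real_differentiable_def by auto
  have P2: "\<forall>\<gamma>\<in>{..<s}.
          (deriv (A m a1 a2) has_real_derivative
             (LINT M:{4 * m\<^sup>2..}|lborel. rho m M * (2 * (M - a1) * (M - a2) / (M - \<gamma>) ^ 3))) (at \<gamma>)
        \<and> (LINT M:{4 * m\<^sup>2..}|lborel. rho m M * (2 * (M - a1) * (M - a2) / (M - \<gamma>) ^ 3)) > 0"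
  proof
    fix \<gamma> assume "\<gamma> \<in> {..<s}"
    hence g: "\<gamma> < 4 * m\<^sup>2" unfolding s_def by simp
    show "(deriv (A m a1 a2) has_real_derivative
             (LINT M:{4 * m\<^sup>2..}|lborel. rho m M * (2 * (M - a1) * (M - a2) / (M - \<gamma>) ^ 3))) (at \<gamma>)
        \<and> (LINT M:{4 * m\<^sup>2..}|lborel. rho m M * (2 * (M - a1) * (M - a2) / (M - \<gamma>) ^ 3)) > 0"
      using deriv_A_deriv[OF m g] A2_integral[OF m g] A2_pos[OF m g a1 a2] by simp
  qed
  have P3: "convex_on {..<s} (A m a1 a2)"
  proof (rule convex_on_realI[where f'="A1 m a1 a2"])
    show "connected {..<s}" by simp
    show "\<And>x. x \<in> {..<s} \<Longrightarrow> (A m a1 a2 has_real_derivative A1 m a1 a2 x) (at x)" using dA by simp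
    show "\<And>x y. x \<in> {..<s} \<Longrightarrow> y \<in> {..<s} \<Longrightarrow> x \<le> y \<Longrightarrow> A1 m a1 a2 x \<le> A1 m a1 a2 y"
      using monoA1 by simp
  qed
  have P4: "mono_on {..<s} (deriv (A m a1 a2))"
    by (rule mono_onI) (use monoA1 eqd in auto)
  have evb: "eventually (\<lambda>x. deriv (A m a1 a2) x = A1 m a1 a2 x) at_bot"
  proof -
    have "eventually (\<lambda>x. x \<le> s - 1) at_bot" by (rule eventually_le_at_bot)
    thus ?thesis by eventually_elim (use eqd in simp)
  qed
  have evl: "eventually (\<lambda>x. deriv (A m a1 a2) x = A1 m a1 a2 x) (at_left s)"
  proof -
    have "eventually (\<lambda>x. x \<in> {s - 1<..<s}) (at_left s)" by (rule eventually_at_left_real) simp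
    thus ?thesis by eventually_elim (use eqd in simp)
  qed
  have LB: "filterlim (A1 m a1 a2) at_bot at_bot" by (rule lim_left[OF m a1 a2])
  have LT: "filterlim (A1 m a1 a2) at_top (at_left s)" unfolding s_def by (rule lim_right[OF m a1 a2])
  have P5: "filterlim (deriv (A m a1 a2)) at_bot at_bot"
    using LB filterlim_cong[OF refl refl evb] by simp
  have P6: "filterlim (deriv (A m a1 a2)) at_top (at_left s)"
    using LT filterlim_cong[OF refl refl evl] by simp
  have P7: "deriv (A m a1 a2) ` {..<s} = UNIV"
  proof (intro set_eqI iffI)
    fix y :: real assume "y \<in> UNIV"
    have "eventually (\<lambda>x. A1 m a1 a2 x \<le> y) at_bot" using LB filterlim_at_bot by blast
    moreover have "eventually (\<lambda>x. x \<le> s - 1) at_bot" by (rule eventually_le_at_bot)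
    ultimately have "eventually (\<lambda>x. A1 m a1 a2 x \<le> y \<and> x \<le> s - 1) at_bot" by eventually_elim simp
    then obtain x1 where x1: "A1 m a1 a2 x1 \<le> y" "x1 \<le> s - 1"
      using eventually_happens'[OF trivial_limit_at_bot_linorder] by blast
    have "eventually (\<lambda>x. y \<le> A1 m a1 a2 x) (at_left s)" using LT filterlim_at_top by blast
    moreover have "eventually (\<lambda>x. x \<in> {x1<..<s}) (at_left s)" by (rule eventually_at_left_real) (use x1 in simp)
    ultimately have "eventually (\<lambda>x. y \<le> A1 m a1 a2 x \<and> x \<in> {x1<..<s}) (at_left s)" by eventually_elim simp
    then obtain x2 where x2: "y \<le> A1 m a1 a2 x2" "x1 < x2" "x2 < s"
      using eventually_happens'[OF trivial_limit_at_left_real] by auto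
    obtain x where x: "x1 \<le> x" "x \<le> x2" "A1 m a1 a2 x = y"
      using IVT'[of "A1 m a1 a2" x1 y x2] x1 x2 cont[OF x2(3)] by auto
    have "x < s" using x x2 by simp
    hence "deriv (A m a1 a2) x = y" using eqd x by simp
    thus "y \<in> deriv (A m a1 a2) ` {..<s}" using \<open>x < s\<close> by force
  qed simp
  show ?thesis using P1 P2 P3 P4 P5 P6 P7 unfolding s_def by blast
qed

end
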